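(* Consider a planar multiple linear antenna array consisting of $M$ linear sub-arrays. Sub-array $m$ ($m=1,\dots,M$) has $N_m$ elements, with inter-element spacing $d_m>0$, and its $n$-th element ($n=1,\dots,N_m$) is located at $(x_{m,1}+(n-1)d_m,\; y_{m,1})$, where the leading element of the first sub-array is at the origin, $(x_{1,1},y_{1,1})=(0,0)$. For a complex weight vector $\mathbf w=(w_{m,n})$ (not identically zero), the beam pattern is $$f_{\mathbf w}(\theta)=\frac{1}{\sum_{m=1}^{M}\sum_{n=1}^{N_m}|w_{m,n}|}\sum_{m=1}^{M} e^{j2\pi(x_{m,1}\sin\theta+y_{m,1}\cos\theta)/\lambda}\sum_{n=1}^{N_m} w_{m,n}\,e^{j2\pi(n-1)d_m\sin\theta/\lambda},$$ where $\lambda>0$ is the wavelength. Let $\theta$ be an angle and $\mathfrak M(\theta)$ an angle with $\mathfrak M(\theta)\neq\theta$. Then $f_{\mathbf w}(\theta)=f_{\mathbf w}(\mathfrak M(\theta))$ holds for every weight vector $\mathbf w$ (i.e. the beam pattern is periodic at $\theta$ with period mapping $\mathfrak M$) if and only if both of the following hold: (C1) for every $i=1,\dots,M$, $\dfrac{d_i\left(\sin\theta-\sin(\mathfrak M(\theta))\right)}{\lambda}\in\mathbb Z\setminus\{0\}$; (C2) for every $l=2,\dots,M$, $\dfrac{x_{l,1}\left(\sin\theta-\sin(\mathfrak M(\theta))\right)+y_{l,1}\left(\cos\theta-\cos(\mathfrak M(\theta))\right)}{\lambda}\in\mathbb Z$.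
   Context: Angles $\theta$ parametrize far-field directions in the plane via the unit vector $(\sin\theta,\cos\theta)$. Definition (principle of grating lobes): the beam pattern $f_{\mathbf w}(\cdot)$ is called periodic (on an angular interval) if there is a mapping $\mathfrak M$ with $\mathfrak M(\theta)\neq\theta$ and $f_{\mathbf w}(\theta)=f_{\mathbf w}(\mathfrak M(\theta))$ for every weight vector $\mathbf w$ and every $\theta$ in the interval; $\mathfrak M$ is called the period mapping. If the absolute radiation maxima occur within the interval, the pattern is said to exhibit grating lobes. *)

theory Defs
  imports Complex_Main
begin

text \<open>Sub-array m (1..M) has N m elements, spacing d m, leading element at (x m, y m);
  the n-th element (1..N m) sits at (x m + (n-1) d m, y m). lam is the wavelength,
  w m n the complex weights.\<close>
definition beam_pattern ::
  "nat \<Rightarrow> (nat \<Rightarrow> nat) \<Rightarrow> (nat \<Rightarrow> real) \<Rightarrow> (nat \<Rightarrow> real) \<Rightarrow> (nat \<Rightarrow> real) \<Rightarrow> real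
   \<Rightarrow> (nat \<Rightarrow> nat \<Rightarrow> complex) \<Rightarrow> real \<Rightarrow> complex" where
  "beam_pattern M N d x y lam w \<theta> =
     (1 / complex_of_real (\<Sum>m=1..M. \<Sum>n=1..N m. cmod (w m n))) *
     (\<Sum>m=1..M. cis (2 * pi * (x m * sin \<theta> + y m * cos \<theta>) / lam) *
        (\<Sum>n=1..N m. w m n * cis (2 * pi * (real n - 1) * d m * sin \<theta> / lam)))"

end

theory Submission
  imports Defs
begin

lemma cis_eq_iff_Ints: "cis a = cis b \<longleftrightarrow> (a - b) / (2*pi) \<in> \<int>"
proof -
  have "cis a = cis b \<longleftrightarrow> sin a = sin b \<and> cos a = cos b"
    by (auto simp: complex_eq_iff)
  also have "\<dots> \<longleftrightarrow> (\<exists>n::int. a = b + 2 * pi * n)" by (rule sin_cos_eq_iff)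
  also have "\<dots> \<longleftrightarrow> (a - b) / (2*pi) \<in> \<int>"
  proof
    assume "\<exists>n::int. a = b + 2 * pi * n"
    then obtain n::int where "a = b + 2*pi*n" by blast
    then have "(a - b) / (2*pi) = of_int n" by simp
    then show "(a - b) / (2*pi) \<in> \<int>" by simp
  next
    assume "(a - b) / (2*pi) \<in> \<int>"
    then obtain n::int where "(a - b) / (2*pi) = of_int n" by (auto elim: Ints_cases)
    then have "a = b + 2*pi*n" by (simp add: field_simps)
    then show "\<exists>n::int. a = b + 2 * pi * n" by blast
  qed
  finally show ?thesis .
qed

lemma bp_single:
  assumes "m \<in> {1..M}" "n \<in> {1..N m}"
  shows "beam_pattern M N d x y lam (\<lambda>m' n'. if m' = m \<and> n' = n then 1 else 0) t =
     cis (2 * pi * (x m * sin t + y m * cos t) / lam) * cis (2 * pi * (real n - 1) * d m * sin t / lam)"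
proof -
  have inner: "(\<Sum>n'=1..N m'. cmod (if m' = m \<and> n' = n then 1 else 0)) = (if m' = m then 1 else 0)"
    if "m' \<in> {1..M}" for m'
    using assms by (simp add: if_distrib sum.delta cong: if_cong)
  have norm: "(\<Sum>m'=1..M. \<Sum>n'=1..N m'. cmod (if m' = m \<and> n' = n then (1::complex) else 0)) = 1"
  proof -
    have "(\<Sum>m'=1..M. \<Sum>n'=1..N m'. cmod (if m' = m \<and> n' = n then (1::complex) else 0))
        = (\<Sum>m'=1..M. (if m' = m then 1 else 0))"
      using inner by (intro sum.cong) auto
    also have "\<dots> = 1" using assms by (simp add: sum.delta)
    finally show ?thesis .
  qed
  have inner2: "cis (2 * pi * (x m' * sin t + y m' * cos t) / lam) *
        (\<Sum>n'=1..N m'. (if m' = m \<and> n' = n then 1 else 0) * cis (2 * pi * (real n' - 1) * d m' * sin t / lam))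
      = (if m' = m then cis (2 * pi * (x m * sin t + y m * cos t) / lam) * cis (2 * pi * (real n - 1) * d m * sin t / lam) else 0)"
    for m'
  proof (cases "m' = m")
    case True
    have "(\<Sum>n'=1..N m. (if n' = n then 1 else 0) * cis (2 * pi * (real n' - 1) * d m * sin t / lam))
        = (\<Sum>n'=1..N m. (if n' = n then cis (2 * pi * (real n' - 1) * d m * sin t / lam) else 0))"
      by (intro sum.cong) auto
    then show ?thesis using True assms by (simp add: sum.delta)
  qed simp
  have "(\<Sum>m'=1..M. cis (2 * pi * (x m' * sin t + y m' * cos t) / lam) *
        (\<Sum>n'=1..N m'. (if m' = m \<and> n' = n then 1 else 0) * cis (2 * pi * (real n' - 1) * d m' * sin t / lam)))
     = (\<Sum>m'=1..M. (if m' = m then cis (2 * pi * (x m * sin t + y m * cos t) / lam) * cis (2 * pi * (real n - 1) * d m * sin t / lam) else 0))"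
    by (rule sum.cong[OF refl], rule inner2)
  also have "\<dots> = cis (2 * pi * (x m * sin t + y m * cos t) / lam) * cis (2 * pi * (real n - 1) * d m * sin t / lam)"
    using assms by (simp add: sum.delta)
  finally show ?thesis
    unfolding beam_pattern_def norm by simp
qed

theorem theorem1:
  fixes M :: nat and N :: "nat \<Rightarrow> nat" and d x y :: "nat \<Rightarrow> real"
    and lam \<theta> \<theta>' :: real
  assumes M_pos: "M \<ge> 1"
    and N_ge: "\<And>m. m \<in> {1..M} \<Longrightarrow> N m \<ge> 2"
    and d_pos: "\<And>m. m \<in> {1..M} \<Longrightarrow> d m > 0"
    and origin: "x 1 = 0" "y 1 = 0"
    and lam_pos: "lam > 0"
    and theta_range: "\<theta> \<in> {-pi/2..pi/2}" "\<theta>' \<in> {-pi/2..pi/2}"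
    and neq: "\<theta>' \<noteq> \<theta>"
  shows "(\<forall>w :: nat \<Rightarrow> nat \<Rightarrow> complex.
            (\<exists>m\<in>{1..M}. \<exists>n\<in>{1..N m}. w m n \<noteq> 0) \<longrightarrow>
            beam_pattern M N d x y lam w \<theta> = beam_pattern M N d x y lam w \<theta>')
         \<longleftrightarrow>
         ((\<forall>i\<in>{1..M}. d i * (sin \<theta> - sin \<theta>') / lam \<in> \<int> - {0}) \<and>
          (\<forall>l\<in>{2..M}. (x l * (sin \<theta> - sin \<theta>') + y l * (cos \<theta> - cos \<theta>')) / lam \<in> \<int>))"
proof -
  define A where "A m t = 2 * pi * (x m * sin t + y m * cos t) / lam" for m t
  define B where "B m n t = 2 * pi * (real n - 1) * d m * sin t / lam" for m n t
  define C2 where "C2 m = (x m * (sin \<theta> - sin \<theta>') + y m * (cos \<theta> - cos \<theta>')) / lam" for m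
  define C1 where "C1 m = d m * (sin \<theta> - sin \<theta>') / lam" for m
  have ds: "sin \<theta> - sin \<theta>' \<noteq> 0"
    using sin_inj_pi[of \<theta> \<theta>'] theta_range neq by auto
  have key: "(A m \<theta> + B m n \<theta> - (A m \<theta>' + B m n \<theta>')) / (2*pi) = C2 m + (real n - 1) * C1 m" for m n
    using lam_pos unfolding A_def B_def C1_def C2_def by (simp add: field_simps)
  have single: "cis (A m \<theta>) * cis (B m n \<theta>) = cis (A m \<theta>') * cis (B m n \<theta>') \<longleftrightarrow>
     C2 m + (real n - 1) * C1 m \<in> \<int>" for m n
    by (simp add: cis_mult cis_eq_iff_Ints key)
  show ?thesis
  proof
    assume H: "\<forall>w :: nat \<Rightarrow> nat \<Rightarrow> complex.
            (\<exists>m\<in>{1..M}. \<exists>n\<in>{1..N m}. w m n \<noteq> 0) \<longrightarrow>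
            beam_pattern M N d x y lam w \<theta> = beam_pattern M N d x y lam w \<theta>'"
    have S: "C2 m + (real n - 1) * C1 m \<in> \<int>" if "m \<in> {1..M}" "n \<in> {1..N m}" for m n
    proof -
      have "beam_pattern M N d x y lam (\<lambda>m' n'. if m' = m \<and> n' = n then 1 else 0) \<theta> =
            beam_pattern M N d x y lam (\<lambda>m' n'. if m' = m \<and> n' = n then 1 else 0) \<theta>'"
      proof -
        have ex: "\<exists>m'\<in>{1..M}. \<exists>n'\<in>{1..N m'}. (\<lambda>m' n'. if m' = m \<and> n' = n then (1::complex) else 0) m' n' \<noteq> 0"
          using that by auto
        show ?thesis by (rule mp[OF spec[OF H] ex])
      qed
      then have "cis (A m \<theta>) * cis (B m n \<theta>) = cis (A m \<theta>') * cis (B m n \<theta>')"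
        unfolding A_def B_def bp_single[of m M n N d x y lam \<theta>, OF that]
          bp_single[of m M n N d x y lam \<theta>', OF that] .
      then show ?thesis using single[of m n] by blast
    qed
    have c2: "C2 m \<in> \<int>" if "m \<in> {1..M}" for m
      using S[of m 1] that N_ge[OF that] by simp
    have c1: "C1 m \<in> \<int>" if "m \<in> {1..M}" for m
    proof -
      have "C2 m + C1 m \<in> \<int>" using S[of m 2] that N_ge[OF that] by simp
      then have "C2 m + C1 m - C2 m \<in> \<int>" using c2[OF that] Ints_diff by blast
      then show ?thesis by simp
    qed
    have c1nz: "C1 m \<noteq> 0" if "m \<in> {1..M}" for m
      using d_pos[OF that] lam_pos ds unfolding C1_def by (simp add: field_simps)
    show "(\<forall>i\<in>{1..M}. d i * (sin \<theta> - sin \<theta>') / lam \<in> \<int> - {0}) \<and>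
          (\<forall>l\<in>{2..M}. (x l * (sin \<theta> - sin \<theta>') + y l * (cos \<theta> - cos \<theta>')) / lam \<in> \<int>)"
      using c1 c1nz c2 unfolding C1_def C2_def by auto
  next
    assume H: "(\<forall>i\<in>{1..M}. d i * (sin \<theta> - sin \<theta>') / lam \<in> \<int> - {0}) \<and>
          (\<forall>l\<in>{2..M}. (x l * (sin \<theta> - sin \<theta>') + y l * (cos \<theta> - cos \<theta>')) / lam \<in> \<int>)"
    have c2: "C2 m \<in> \<int>" if "m \<in> {1..M}" for m
    proof (cases "m = 1")
      case True then show ?thesis using origin unfolding C2_def by simp
    next
      case False then have "m \<in> {2..M}" using that by auto
      then show ?thesis using conjunct2[OF H] unfolding C2_def by (rule bspec[rotated])
    qed
    have c1: "C1 m \<in> \<int>" if "m \<in> {1..M}" for m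
    proof -
      have "d m * (sin \<theta> - sin \<theta>') / lam \<in> \<int> - {0}" using conjunct1[OF H] that by (rule bspec)
      then show ?thesis unfolding C1_def by simp
    qed
    have term_eq: "cis (A m \<theta>) * cis (B m n \<theta>) = cis (A m \<theta>') * cis (B m n \<theta>')"
      if "m \<in> {1..M}" "n \<in> {1..N m}" for m n
    proof -
      have "real n - 1 = real (n - 1)" using that by auto
      then have "(real n - 1) * C1 m \<in> \<int>" using c1[OF that(1)] by (metis Ints_mult Ints_of_nat)
      then show ?thesis using single[of m n] c2[OF that(1)] Ints_add by blast
    qed
    show "\<forall>w :: nat \<Rightarrow> nat \<Rightarrow> complex.
            (\<exists>m\<in>{1..M}. \<exists>n\<in>{1..N m}. w m n \<noteq> 0) \<longrightarrow>
            beam_pattern M N d x y lam w \<theta> = beam_pattern M N d x y lam w \<theta>'"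
    proof (intro allI impI)
      fix w :: "nat \<Rightarrow> nat \<Rightarrow> complex"
      have "cis (A m \<theta>) * (\<Sum>n=1..N m. w m n * cis (B m n \<theta>)) =
            cis (A m \<theta>') * (\<Sum>n=1..N m. w m n * cis (B m n \<theta>'))" if "m \<in> {1..M}" for m
      proof -
        have "cis (A m \<theta>) * (\<Sum>n=1..N m. w m n * cis (B m n \<theta>)) =
              (\<Sum>n=1..N m. w m n * (cis (A m \<theta>) * cis (B m n \<theta>)))"
          by (simp add: sum_distrib_left algebra_simps)
        also have "\<dots> = (\<Sum>n=1..N m. w m n * (cis (A m \<theta>') * cis (B m n \<theta>')))"
          using term_eq[OF that] by (intro sum.cong) auto
        also have "\<dots> = cis (A m \<theta>') * (\<Sum>n=1..N m. w m n * cis (B m n \<theta>'))"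
          by (simp add: sum_distrib_left algebra_simps)
        finally show ?thesis .
      qed
      then have "(\<Sum>m=1..M. cis (A m \<theta>) * (\<Sum>n=1..N m. w m n * cis (B m n \<theta>))) =
                 (\<Sum>m=1..M. cis (A m \<theta>') * (\<Sum>n=1..N m. w m n * cis (B m n \<theta>')))"
        by (intro sum.cong) auto
      then show "beam_pattern M N d x y lam w \<theta> = beam_pattern M N d x y lam w \<theta>'"
        unfolding beam_pattern_def A_def B_def by simp
    qed
  qed
qed

end
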